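(* For any $F\in\mathscr{F}_{\mathrm{opt}}\cap\mathscr{F}_1$, $i\in\mathcal{R}_F$ and $s\in\mathcal{S}$, if $\bar{\mathcal{P}}^0_{F,i}(f_i(s))=\emptyset$ and $|\mathcal{S}_{F,i}(f_i(s))|=1$, then $|\mathcal{P}^2_{F,\tau_i(s)}|=4$.
   Context: $\mathcal{S}$ is a finite source alphabet with $|\mathcal{S}|\ge 2$ and $\mathcal{C}=\{0,1\}$; $\mathcal{A}^k,\mathcal{A}^{\ast},\mathcal{A}^{+}$ are sequences of length $k$, finite, positive finite length; $\lambda$ empty sequence; $\preceq$ prefix, $\prec$ proper prefix; $\mathrm{suff}(x_1\cdots x_n)=x_2\cdots x_n$. A code-tuple $F$ with $m\ge1$ code tables consists of maps $f_i:\mathcal{S}\to\mathcal{C}^{\ast}$ and $\tau_i:\mathcal{S}\to\{0,\dots,m-1\}$, $i\in[F]=\{0,\dots,m-1\}$; $|F|=m$. $f_i^{\ast}(\lambda)=\lambda$, $\tau_i^{\ast}(\lambda)=i$, and for $\pmb{x}=x_1\cdots x_n\ne\lambda$, $f_i^{\ast}(\pmb{x})=f_i(x_1)f^{\ast}_{\tau_i(x_1)}(\mathrm{suff}(\pmb{x}))$, $\tau_i^{\ast}(\pmb{x})=\tau^{\ast}_{\tau_i(x_1)}(\mathrm{suff}(\pmb{x}))$. $\mathcal{S}_{F,i}(\pmb{b})=\{s:f_i(s)=\pmb{b}\}$. For integer $k\ge0$, $\pmb{b}\in\mathcal{C}^{\ast}$: $\mathcal{P}^k_{F,i}(\pmb{b})$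 is the set of $\pmb{c}\in\mathcal{C}^k$ such that some $\pmb{x}=x_1\cdots x_n\in\mathcal{S}^{+}$ has $f_i^{\ast}(\pmb{x})\succeq\pmb{b}\pmb{c}$ and $f_i(x_1)\succeq\pmb{b}$; $\bar{\mathcal{P}}^k_{F,i}(\pmb{b})$ the same with $f_i(x_1)\succ\pmb{b}$; $\mathcal{P}^k_{F,i}=\mathcal{P}^k_{F,i}(\lambda)$. $F\in\mathscr{F}_{2\text{-}\mathrm{dec}}$ if $\mathcal{P}^2_{F,\tau_i(s)}\cap\bar{\mathcal{P}}^2_{F,i}(f_i(s))=\emptyset$ for all $i,s$, and $\mathcal{P}^2_{F,\tau_i(s)}\cap\mathcal{P}^2_{F,\tau_i(s')}=\emptyset$ whenever $s\ne s'$, $f_i(s)=f_i(s')$. $F\in\mathscr{F}_{\mathrm{ext}}$ if $\mathcal{P}^1_{F,i}\ne\emptyset$ for all $i$. Fix $\mu:\mathcal{S}\to(0,1]$ with $\sum_s\mu(s)=1$; $Q(F)$ has entries $Q_{i,j}(F)=\sum_{s:\tau_i(s)=j}\mu(s)$; $F\in\mathscr{F}_{\mathrm{reg}}$ if $\pmb{\pi}Q(F)=\pmb{\pi}$, $\sum_i\pi_i=1$ has a unique solution $\pmb{\pi}(F)$; then $L(F)=\sum_i\pi_i(F)\sum_s|f_i(s)|\mu(s)$. $\mathscr{F}_0=\mathscr{F}_{\mathrm{reg}}\cap\mathscr{F}_{\mathrm{ext}}\cap\mathscr{F}_{2\text{-}\mathrm{dec}}$; $\mathscr{F}_{\mathrm{opt}}$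 is the set of $F\in\mathscr{F}_0$ with $L(F)\le L(F')$ for all $F'\in\mathscr{F}_0$. $\mathscr{F}_1=\{F\in\mathscr{F}_{\mathrm{reg}}\cap\mathscr{F}_{2\text{-}\mathrm{dec}}:\mathcal{P}^1_{F,i}=\{0,1\}\ \forall i\in[F]\}$. $\mathcal{R}_F=\{i\in[F]:\text{for every }j\in[F]\text{ there is }\pmb{x}\in\mathcal{S}^{\ast}\text{ with }\tau^{\ast}_j(\pmb{x})=i\}$. *)

theory Defs
  imports Complex_Main "HOL-Library.Sublist"
begin

text \<open>A code-tuple over the source alphabet 's (a finite type) with binary code alphabet
  (bool, False = 0, True = 1). Tables are indexed by 0..<ntab F.\<close>

record 's code_tuple =
  ntab :: nat
  enc :: "nat \<Rightarrow> 's \<Rightarrow> bool list"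
  trans :: "nat \<Rightarrow> 's \<Rightarrow> nat"

definition is_code_tuple :: "'s code_tuple \<Rightarrow> bool" where
  "is_code_tuple F \<longleftrightarrow> ntab F \<ge> 1 \<and> (\<forall>i<ntab F. \<forall>s. trans F i s < ntab F)"

fun fstar :: "'s code_tuple \<Rightarrow> nat \<Rightarrow> 's list \<Rightarrow> bool list" where
  "fstar F i [] = []"
| "fstar F i (x # xs) = enc F i x @ fstar F (trans F i x) xs"

fun taustar :: "'s code_tuple \<Rightarrow> nat \<Rightarrow> 's list \<Rightarrow> nat" where
  "taustar F i [] = i"
| "taustar F i (x # xs) = taustar F (trans F i x) xs"

definition Pset :: "nat \<Rightarrow> 's code_tuple \<Rightarrow> nat \<Rightarrow> bool list \<Rightarrow> bool list set" where
  "Pset k F i b = {c. length c = k \<and> (\<exists>x. x \<noteq> [] \<and> prefix (b @ c) (fstar F i x)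
                                           \<and> prefix b (enc F i (hd x)))}"

definition Pbar :: "nat \<Rightarrow> 's code_tuple \<Rightarrow> nat \<Rightarrow> bool list \<Rightarrow> bool list set" where
  "Pbar k F i b = {c. length c = k \<and> (\<exists>x. x \<noteq> [] \<and> prefix (b @ c) (fstar F i x)
                                           \<and> strict_prefix b (enc F i (hd x)))}"

definition Sset :: "'s code_tuple \<Rightarrow> nat \<Rightarrow> bool list \<Rightarrow> 's set" where
  "Sset F i b = {s. enc F i s = b}"

definition two_dec :: "'s code_tuple \<Rightarrow> bool" where
  "two_dec F \<longleftrightarrow> (\<forall>i<ntab F. \<forall>s.
      Pset 2 F (trans F i s) [] \<inter> Pbar 2 F i (enc F i s) = {}) \<and>
    (\<forall>i<ntab F. \<forall>s s'. s \<noteq> s' \<and> enc F i s = enc F i s' \<longrightarrow>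
      Pset 2 F (trans F i s) [] \<inter> Pset 2 F (trans F i s') [] = {})"

definition ext :: "'s code_tuple \<Rightarrow> bool" where
  "ext F \<longleftrightarrow> (\<forall>i<ntab F. Pset 1 F i [] \<noteq> {})"

definition Qmat :: "('s::finite \<Rightarrow> real) \<Rightarrow> 's code_tuple \<Rightarrow> nat \<Rightarrow> nat \<Rightarrow> real" where
  "Qmat mu F i j = (\<Sum>s\<in>{s. trans F i s = j}. mu s)"

definition stationary :: "('s::finite \<Rightarrow> real) \<Rightarrow> 's code_tuple \<Rightarrow> (nat \<Rightarrow> real) \<Rightarrow> bool" where
  "stationary mu F p \<longleftrightarrow> (\<forall>j. j \<ge> ntab F \<longrightarrow> p j = 0) \<and>
     (\<forall>j<ntab F. (\<Sum>i<ntab F. p i * Qmat mu F i j) = p j) \<and> (\<Sum>i<ntab F. p i) = 1"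

definition reg :: "('s::finite \<Rightarrow> real) \<Rightarrow> 's code_tuple \<Rightarrow> bool" where
  "reg mu F \<longleftrightarrow> (\<exists>!p. stationary mu F p)"

definition stat_dist :: "('s::finite \<Rightarrow> real) \<Rightarrow> 's code_tuple \<Rightarrow> nat \<Rightarrow> real" where
  "stat_dist mu F = (THE p. stationary mu F p)"

definition avg_len :: "('s::finite \<Rightarrow> real) \<Rightarrow> 's code_tuple \<Rightarrow> real" where
  "avg_len mu F = (\<Sum>i<ntab F. stat_dist mu F i * (\<Sum>s\<in>UNIV. real (length (enc F i s)) * mu s))"

definition F0 :: "('s::finite \<Rightarrow> real) \<Rightarrow> 's code_tuple \<Rightarrow> bool" where
  "F0 mu F \<longleftrightarrow> is_code_tuple F \<and> reg mu F \<and> ext F \<and> two_dec F"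

definition Fopt :: "('s::finite \<Rightarrow> real) \<Rightarrow> 's code_tuple \<Rightarrow> bool" where
  "Fopt mu F \<longleftrightarrow> F0 mu F \<and> (\<forall>F'. F0 mu F' \<longrightarrow> avg_len mu F \<le> avg_len mu F')"

definition F1 :: "('s::finite \<Rightarrow> real) \<Rightarrow> 's code_tuple \<Rightarrow> bool" where
  "F1 mu F \<longleftrightarrow> is_code_tuple F \<and> reg mu F \<and> two_dec F \<and>
     (\<forall>i<ntab F. Pset 1 F i [] = {[False], [True]})"

definition Rset :: "'s code_tuple \<Rightarrow> nat set" where
  "Rset F = {i. i < ntab F \<and> (\<forall>j<ntab F. \<exists>x. taustar F j x = i)}"

end

theory Submission
  imports Defs
begin



lemma fstar_append: "fstar F a (x @ y) = fstar F a x @ fstar F (taustar F a x) y"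
  by (induction x arbitrary: a) auto

lemma taustar_lt: "is_code_tuple F \<Longrightarrow> a < ntab F \<Longrightarrow> taustar F a x < ntab F"
  by (induction x arbitrary: a) (auto simp: is_code_tuple_def)

lemma prefix_take_iff: "prefix c w \<longleftrightarrow> take (length c) w = c"
  unfolding prefix_def by (metis append_eq_conv_conj append_take_drop_id)

lemma Pset_nil: "n > 0 \<Longrightarrow> Pset n F a [] = {c. length c = n \<and> (\<exists>x. prefix c (fstar F a x))}"
  unfolding Pset_def
  apply (rule set_eqI)
  apply simp
  apply (rule iffI)
   apply blast
  apply clarsimp
  subgoal for c x by (rule exI[of _ x]) (cases x; auto)
  done

lemma Pbar_char: "Pbar n F a b = {c. length c = n \<and> (\<exists>t y. strict_prefix b (enc F a t) \<and>
    prefix (b @ c) (enc F a t @ fstar F (trans F a t) y))}"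
  unfolding Pbar_def
  apply (rule set_eqI; rule iffI)
   apply clarsimp
   subgoal for c x by (cases x) auto
  apply clarsimp
  subgoal for c t y by (rule exI[of _ "t # y"]) auto
  done

lemma take2_app1: "f \<noteq> [] \<Longrightarrow> take 1 u = take 1 w \<Longrightarrow> take 2 (f @ u) = take 2 (f @ w)"
  by (cases f; cases "tl f") (auto simp: take_Cons')

lemma take2_app2: "take 2 u = take 2 w \<Longrightarrow> take 2 (f @ u) = take 2 (f @ w)"
  by (metis take_append take_take diff_le_self min_absorb1)

lemma prefix_app_take1: "length p \<le> length f + 1 \<Longrightarrow> prefix p (f @ w) \<longleftrightarrow> prefix p (f @ take 1 w)"
  unfolding prefix_take_iff
  by (cases "length p \<le> length f") (auto simp: take_append min_def take_take)

lemma Pbar_char1: "Pbar 2 F a b = {c. length c = 2 \<and> (\<exists>t y. strict_prefix b (enc F a t) \<and>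
    prefix (b @ c) (enc F a t @ take 1 (fstar F (trans F a t) y)))}"
proof -
  have "strict_prefix b f \<Longrightarrow> length c = 2 \<Longrightarrow> prefix (b @ c) (f @ w) \<longleftrightarrow> prefix (b @ c) (f @ take 1 w)" for f w c
    by (rule prefix_app_take1) (simp add: prefix_length_less Suc_leI)
  then show ?thesis unfolding Pbar_char by blast
qed




lemma Qmat_alt: "Qmat mu G a b = (\<Sum>t\<in>UNIV. if trans G a t = b then mu t else 0)"
  unfolding Qmat_def by (simp add: sum.If_cases Collect_conj_eq[symmetric])

lemma Qmat_fiber:
  fixes mu :: "'s::finite \<Rightarrow> real"
  assumes "finite B"
  shows "(\<Sum>b\<in>B. Qmat mu G a b) = (\<Sum>t\<in>UNIV. if trans G a t \<in> B then mu t else 0)"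
proof -
  have "(\<Sum>b\<in>B. Qmat mu G a b) = (\<Sum>t\<in>UNIV. \<Sum>b\<in>B. if trans G a t = b then mu t else 0)"
    unfolding Qmat_alt by (rule sum.swap)
  also have "\<dots> = (\<Sum>t\<in>UNIV. if trans G a t \<in> B then mu t else 0)"
    using assms by (simp add: sum.delta)
  finally show ?thesis .
qed

lemma Qmat_nonneg: "(\<forall>x. 0 \<le> mu x) \<Longrightarrow> 0 \<le> Qmat mu G a b"
  unfolding Qmat_def by (simp add: sum_nonneg)

lemma Qmat_ge: "(\<forall>x. 0 \<le> (mu::'s::finite \<Rightarrow> real) x) \<Longrightarrow> trans G a t = b \<Longrightarrow> mu t \<le> Qmat mu G a b"
  unfolding Qmat_def by (rule member_le_sum) auto

lemma Qmat_rowsum: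
  fixes mu :: "'s::finite \<Rightarrow> real"
  assumes "is_code_tuple G" "a < ntab G" "(\<Sum>x\<in>UNIV. mu x) = 1"
  shows "(\<Sum>b<ntab G. Qmat mu G a b) = 1"
  using assms by (simp add: Qmat_fiber is_code_tuple_def)

lemma stat_ok: "reg mu G \<Longrightarrow> stationary mu G (stat_dist mu G)"
  using theI'[of "stationary mu G"] unfolding reg_def stat_dist_def by blast

lemma stat_eq: "reg mu G \<Longrightarrow> stationary mu G q \<Longrightarrow> stat_dist mu G = q"
  unfolding reg_def stat_dist_def by (rule the1_equality)

lemma stat_abs:
  fixes mu :: "'s::finite \<Rightarrow> real"
  assumes ct: "is_code_tuple G" and mu: "\<forall>x. 0 \<le> mu x" "(\<Sum>x\<in>UNIV. mu x) = 1"
    and st: "stationary mu G p"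
  shows "stationary mu G (\<lambda>a. \<bar>p a\<bar> / (\<Sum>b<ntab G. \<bar>p b\<bar>))"
proof -
  let ?n = "ntab G"
  define S where "S = (\<Sum>b<?n. \<bar>p b\<bar>)"
  have p0: "\<forall>j. j \<ge> ?n \<longrightarrow> p j = 0" and pe: "\<forall>j<?n. (\<Sum>i<?n. p i * Qmat mu G i j) = p j"
    and p1: "(\<Sum>i<?n. p i) = 1" using st unfolding stationary_def by auto
  have "1 \<le> S" unfolding S_def using p1 by (metis sum_abs abs_one)
  have le: "\<bar>p b\<bar> \<le> (\<Sum>i<?n. \<bar>p i\<bar> * Qmat mu G i b)" if "b < ?n" for b
  proof -
    have "\<bar>p b\<bar> = \<bar>\<Sum>i<?n. p i * Qmat mu G i b\<bar>" using pe that by simp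
    also have "\<dots> \<le> (\<Sum>i<?n. \<bar>p i * Qmat mu G i b\<bar>)" by (rule sum_abs)
    also have "\<dots> = (\<Sum>i<?n. \<bar>p i\<bar> * Qmat mu G i b)"
      using Qmat_nonneg[OF mu(1)] by (simp add: abs_mult)
    finally show ?thesis .
  qed
  have tot: "(\<Sum>b<?n. \<Sum>i<?n. \<bar>p i\<bar> * Qmat mu G i b) = S"
  proof -
    have "(\<Sum>b<?n. \<Sum>i<?n. \<bar>p i\<bar> * Qmat mu G i b) = (\<Sum>i<?n. \<bar>p i\<bar> * (\<Sum>b<?n. Qmat mu G i b))"
      by (subst sum.swap) (simp add: sum_distrib_left)
    also have "\<dots> = S" unfolding S_def using Qmat_rowsum[OF ct _ mu(2)] by simp
    finally show ?thesis .
  qed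
  have eq: "(\<Sum>i<?n. \<bar>p i\<bar> * Qmat mu G i b) = \<bar>p b\<bar>" if "b < ?n" for b
  proof -
    have "(\<Sum>b<?n. (\<Sum>i<?n. \<bar>p i\<bar> * Qmat mu G i b) - \<bar>p b\<bar>) = 0"
      using tot by (simp add: sum_subtractf S_def)
    moreover have "\<forall>b\<in>{..<?n}. 0 \<le> (\<Sum>i<?n. \<bar>p i\<bar> * Qmat mu G i b) - \<bar>p b\<bar>" using le by simp
    ultimately have "\<forall>b\<in>{..<?n}. (\<Sum>i<?n. \<bar>p i\<bar> * Qmat mu G i b) - \<bar>p b\<bar> = 0"
      using sum_nonneg_eq_0_iff[OF finite_lessThan[of ?n], where f="\<lambda>b. (\<Sum>i<?n. \<bar>p i\<bar> * Qmat mu G i b) - \<bar>p b\<bar>"]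
      by simp
    then show ?thesis using that by simp
  qed
  show ?thesis unfolding stationary_def S_def[symmetric]
  proof (intro conjI allI impI)
    show "\<And>j. ?n \<le> j \<Longrightarrow> \<bar>p j\<bar> / S = 0" using p0 by simp
    show "(\<Sum>i<?n. \<bar>p i\<bar> / S * Qmat mu G i j) = \<bar>p j\<bar> / S" if "j < ?n" for j
      using eq[OF that] by (simp add: sum_divide_distrib[symmetric])
    show "(\<Sum>i<?n. \<bar>p i\<bar> / S) = 1" using \<open>1 \<le> S\<close> by (simp add: sum_divide_distrib[symmetric] S_def)
  qed
qed

lemma stat_nonneg:
  fixes mu :: "'s::finite \<Rightarrow> real"
  assumes ct: "is_code_tuple G" and mu: "\<forall>x. 0 \<le> mu x" "(\<Sum>x\<in>UNIV. mu x) = 1"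
    and rg: "reg mu G"
  shows "0 \<le> stat_dist mu G a"
proof -
  have "stat_dist mu G = (\<lambda>a. \<bar>stat_dist mu G a\<bar> / (\<Sum>b<ntab G. \<bar>stat_dist mu G b\<bar>))"
    using stat_eq[OF rg stat_abs[OF ct mu stat_ok[OF rg]]] .
  then have "stat_dist mu G a = \<bar>stat_dist mu G a\<bar> / (\<Sum>b<ntab G. \<bar>stat_dist mu G b\<bar>)" by metis
  also have "\<dots> \<ge> 0" by (simp add: sum_nonneg)
  finally show ?thesis .
qed

lemma stat_step:
  fixes mu :: "'s::finite \<Rightarrow> real"
  assumes ct: "is_code_tuple G" and mu: "\<forall>x. 0 \<le> mu x"
    and st: "stationary mu G p" and nn: "\<forall>a. 0 \<le> p a" and a: "a < ntab G"
  shows "p a * mu t \<le> p (trans G a t)"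
proof -
  let ?b = "trans G a t"
  have b: "?b < ntab G" using ct a unfolding is_code_tuple_def by auto
  have "p a * mu t \<le> p a * Qmat mu G a ?b"
    using Qmat_ge[OF mu] nn by (simp add: mult_left_mono)
  also have "\<dots> \<le> (\<Sum>i<ntab G. p i * Qmat mu G i ?b)"
    by (rule member_le_sum[where f="\<lambda>i. p i * Qmat mu G i ?b"]) (use a nn Qmat_nonneg[OF mu] in auto)
  also have "\<dots> = p ?b" using st b unfolding stationary_def by auto
  finally show ?thesis .
qed

lemma stat_pos_reach:
  fixes mu :: "'s::finite \<Rightarrow> real"
  assumes ct: "is_code_tuple G" and mu: "\<forall>x. 0 < mu x"
    and st: "stationary mu G p" and nn: "\<forall>a. 0 \<le> p a"
  shows "a < ntab G \<Longrightarrow> 0 < p a \<Longrightarrow> 0 < p (taustar G a x)"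
proof (induction x arbitrary: a)
  case Nil then show ?case by simp
next
  case (Cons t x)
  have "0 < p a * mu t" using Cons mu by simp
  also have "\<dots> \<le> p (trans G a t)" using stat_step[OF ct _ st nn Cons(2)] mu by (simp add: less_imp_le)
  finally have "0 < p (trans G a t)" .
  moreover have "trans G a t < ntab G" using ct Cons(2) unfolding is_code_tuple_def by auto
  ultimately show ?case using Cons.IH by simp
qed

lemma stat_pos_R:
  fixes mu :: "'s::finite \<Rightarrow> real"
  assumes ct: "is_code_tuple G" and mu: "\<forall>x. 0 < mu x"
    and st: "stationary mu G p" and nn: "\<forall>a. 0 \<le> p a" and i: "i \<in> Rset G"
  shows "0 < p i"
proof -
  have "(\<Sum>a<ntab G. p a) = 1" using st unfolding stationary_def by auto
  then obtain a where a: "a < ntab G" "0 < p a"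
    by (metis lessThan_iff not_less sum_nonpos zero_less_one)
  then obtain x where x: "taustar G a x = i" using i unfolding Rset_def by auto
  have "0 < p (taustar G a x)" using stat_pos_reach[OF ct mu st nn a(1) a(2)] .
  then show ?thesis using x by simp
qed




definition phi :: "bool \<Rightarrow> bool list \<Rightarrow> bool list" where
  "phi c w = (case w of [] \<Rightarrow> [] | a # w' \<Rightarrow> if a = c then a # tl w' else w)"

definition okw :: "bool \<Rightarrow> bool \<Rightarrow> bool list \<Rightarrow> bool" where
  "okw c e w \<longleftrightarrow> (w \<noteq> [] \<longrightarrow> hd w = c \<longrightarrow> tl w \<noteq> [] \<and> hd (tl w) = e)"

lemma phi_Nil[simp]: "phi c [] = []" by (simp add: phi_def)

lemma phi_eq_Nil[simp]: "phi c w = [] \<longleftrightarrow> w = []"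
  by (cases w) (auto simp: phi_def)

lemma phi_take1: "take 1 (phi c w) = take 1 w"
  by (cases w) (auto simp: phi_def)

lemma phi_take1': "take (Suc 0) (phi c w) = take (Suc 0) w"
  by (cases w) (auto simp: phi_def)

lemma phi_len: "length (phi c w) \<le> length w"
  by (cases w) (auto simp: phi_def)

lemma phi_len_less: "w = c # g \<Longrightarrow> g \<noteq> [] \<Longrightarrow> length (phi c w) < length w"
  by (cases g) (auto simp: phi_def)

lemma phi_id: "w = [] \<or> hd w \<noteq> c \<Longrightarrow> phi c w = w"
  by (cases w) (auto simp: phi_def)

lemma phi_hd: "w \<noteq> [] \<Longrightarrow> hd (phi c w) = hd w"
  by (cases w) (auto simp: phi_def)

lemma phi_app: "w \<noteq> [] \<Longrightarrow> okw c e w \<Longrightarrow> phi c (w @ u) = phi c w @ u"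
  by (cases w; cases "tl w") (auto simp: phi_def okw_def)

lemma phi_inj: "okw c e f \<Longrightarrow> okw c e g \<Longrightarrow> phi c f = phi c g \<Longrightarrow> f = g"
  by (cases f; cases g; cases "tl f"; cases "tl g") (auto simp: phi_def okw_def split: if_splits)

lemma pre_hd: "prefix u v \<Longrightarrow> u \<noteq> [] \<Longrightarrow> hd v = hd u"
  unfolding prefix_def by auto

lemma spre_hd: "strict_prefix u v \<Longrightarrow> u \<noteq> [] \<Longrightarrow> hd v = hd u"
  using pre_hd prefix_order.less_imp_le by blast

lemma phi_pbar:
  assumes "okw c e f" "okw c e g" "f = [] \<Longrightarrow> hd g \<noteq> c" "g \<noteq> []"
    "strict_prefix (phi c f) (phi c g)" "prefix (phi c f @ cc) (phi c g @ v)"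
  shows "strict_prefix f g \<and> prefix (f @ cc) (g @ v)"
proof (cases "f = []")
  case True
  then have "phi c g = g" using assms(3) by (intro phi_id) auto
  then show ?thesis using assms True by simp
next
  case False
  show ?thesis
  proof (cases "hd f = c")
    case False
    have pf: "phi c f = f" using False by (intro phi_id) auto
    have "phi c f \<noteq> []" using \<open>f \<noteq> []\<close> by simp
    then have "hd (phi c g) = hd f" using spre_hd[OF assms(5)] pf by simp
    then have "hd g \<noteq> c" using phi_hd[OF assms(4)] False by simp
    then have "phi c g = g" by (intro phi_id) auto
    then show ?thesis using assms pf by simp
  next
    case True
    have "tl f \<noteq> [] \<and> hd (tl f) = e" using assms(1) \<open>f \<noteq> []\<close> True unfolding okw_def by blast
    then have "f = c # e # tl (tl f)" using \<open>f \<noteq> []\<close> True by (cases f; cases "tl f") auto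
    then obtain f' where f: "f = c # e # f'" by blast
    have "phi c f = c # f'" using f by (simp add: phi_def)
    then have "hd (phi c g) = c" using spre_hd[OF assms(5)] by simp
    then have "hd g = c" using phi_hd[OF assms(4)] by simp
    then have "tl g \<noteq> [] \<and> hd (tl g) = e" using assms(2,4) unfolding okw_def by blast
    then have "g = c # e # tl (tl g)" using assms(4) \<open>hd g = c\<close> by (cases g; cases "tl g") auto
    then obtain g' where g: "g = c # e # g'" by blast
    have "phi c g = c # g'" using g by (simp add: phi_def)
    then show ?thesis using assms(5,6) f g \<open>phi c f = c # f'\<close> by auto
  qed
qed




locale L15 =
  fixes mu :: "'s::finite \<Rightarrow> real" and F :: "'s code_tuple" and i :: nat and s :: 's
    and c1 c2 :: bool
  assumes card2: "card (UNIV :: 's set) \<ge> 2"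
    and mu_pos: "\<forall>x. 0 < mu x" and mu_sum: "(\<Sum>x\<in>UNIV. mu x) = 1"
    and ct: "is_code_tuple F" and rg: "reg mu F" and td: "two_dec F"
    and P1: "\<forall>a<ntab F. Pset 1 F a [] = {[False], [True]}"
    and iR: "i \<in> Rset F"
    and nobar: "Pbar 0 F i (enc F i s) = {}"
    and uniq: "card (Sset F i (enc F i s)) = 1"
    and miss: "[c1, c2] \<notin> Pset 2 F (trans F i s) []"
begin

abbreviation "m \<equiv> ntab F"
abbreviation "j \<equiv> trans F i s"

lemma i_lt: "i < m" using iR unfolding Rset_def by auto

lemma trans_lt: "a < m \<Longrightarrow> trans F a t < m" using ct unfolding is_code_tuple_def by auto

lemma j_lt: "j < m" using trans_lt i_lt by simp

lemma P1ex: "a < m \<Longrightarrow> \<exists>x. take 1 (fstar F a x) = [b]"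
proof -
  assume a: "a < m"
  have "[b] \<in> Pset 1 F a []" using P1 a by (cases b) auto
  then obtain x where "prefix [b] (fstar F a x)" by (auto simp: Pset_nil)
  then have "take 1 (fstar F a x) = [b]" using prefix_take_iff[of "[b]"] by simp
  then show ?thesis by blast
qed

lemma ext_any: "a < m \<Longrightarrow> \<exists>y. fstar F a y \<noteq> []"
  using P1ex[of a False] by (metis list.distinct(1) take_Nil)

lemma mem_P2: "prefix c (fstar F a x) \<Longrightarrow> length c = 2 \<Longrightarrow> c \<in> Pset 2 F a []"
  by (auto simp: Pset_nil)

lemma ext2: "a < m \<Longrightarrow> \<exists>e. [b, e] \<in> Pset 2 F a []"
proof -
  assume a: "a < m"
  obtain x where x: "take 1 (fstar F a x) = [b]" using P1ex[OF a] by blast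
  then obtain u where u: "fstar F a x = b # u" by (cases "fstar F a x") auto
  have k: "taustar F a x < m" using taustar_lt[OF ct a] .
  obtain y where y: "fstar F (taustar F a x) y \<noteq> []" using ext_any[OF k] by blast
  have w: "fstar F a (x @ y) = b # (u @ fstar F (taustar F a x) y)" using u by (simp add: fstar_append)
  have "prefix [b, hd (u @ fstar F (taustar F a x) y)] (fstar F a (x @ y))"
    unfolding w using y by (cases "u @ fstar F (taustar F a x) y") auto
  then show ?thesis using mem_P2 by fastforce
qed

definition inE :: "nat \<Rightarrow> bool" where
  "inE K \<longleftrightarrow> K < m \<and> [c1, c2] \<notin> Pset 2 F K []"

lemma inE_j: "inE j" using miss j_lt by (simp add: inE_def)

lemma inE_c1d: "inE K \<Longrightarrow> [c1, \<not> c2] \<in> Pset 2 F K []"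
proof -
  assume K: "inE K"
  then obtain e where "[c1, e] \<in> Pset 2 F K []" using ext2[of K c1] by (auto simp: inE_def)
  moreover then have "e \<noteq> c2" using K inE_def by blast
  then have "e = (\<not> c2)" by blast
  ultimately show ?thesis by simp
qed

lemma empty_sub: "enc F K t = [] \<Longrightarrow> Pset 2 F (trans F K t) [] \<subseteq> Pset 2 F K []"
proof
  fix c assume e: "enc F K t = []" and "c \<in> Pset 2 F (trans F K t) []"
  then obtain x where "length c = 2" "prefix c (fstar F (trans F K t) x)" by (auto simp: Pset_nil)
  moreover have "fstar F K (t # x) = fstar F (trans F K t) x" using e by simp
  ultimately show "c \<in> Pset 2 F K []" by (metis mem_P2)
qed

lemma inE_next: "inE K \<Longrightarrow> enc F K t = [] \<Longrightarrow> inE (trans F K t)"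
  using empty_sub trans_lt unfolding inE_def by blast

lemma td1: "K < m \<Longrightarrow> Pset 2 F (trans F K t) [] \<inter> Pbar 2 F K (enc F K t) = {}"
  using td unfolding two_dec_def by blast

lemma td2: "K < m \<Longrightarrow> t \<noteq> t' \<Longrightarrow> enc F K t = enc F K t' \<Longrightarrow>
    Pset 2 F (trans F K t) [] \<inter> Pset 2 F (trans F K t') [] = {}"
  using td unfolding two_dec_def by blast

lemma inE_uniq_empty: "inE K \<Longrightarrow> enc F K t = [] \<Longrightarrow> enc F K t' = [] \<Longrightarrow> t = t'"
proof (rule ccontr)
  assume K: "inE K" and e: "enc F K t = []" "enc F K t' = []" and ne: "t \<noteq> t'"
  have "[c1, \<not> c2] \<in> Pset 2 F (trans F K t) []" using inE_c1d inE_next K e(1) by blast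
  moreover have "[c1, \<not> c2] \<in> Pset 2 F (trans F K t') []" using inE_c1d inE_next K e(2) by blast
  moreover have "Pset 2 F (trans F K t) [] \<inter> Pset 2 F (trans F K t') [] = {}"
    using td2[of K t t'] K e ne by (simp add: inE_def)
  ultimately show False by blast
qed

lemma inE_empty_noc1:
  assumes K: "inE K" and e: "enc F K t = []" and c: "enc F K t' = c1 # g"
  shows False
proof -
  have Km: "K < m" using K by (simp add: inE_def)
  obtain y where y: "fstar F (trans F K t') y \<noteq> []" using ext_any trans_lt Km by blast
  define e' where "e' = hd (g @ fstar F (trans F K t') y)"
  have pre: "prefix [c1, e'] (enc F K t' @ fstar F (trans F K t') y)"
    unfolding c e'_def using y by (cases "g @ fstar F (trans F K t') y") auto
  have sp: "strict_prefix [] (enc F K t')" using c by simp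
  have "[c1, e'] \<in> Pbar 2 F K []" unfolding Pbar_char using pre sp by auto
  moreover have "[c1, e'] \<in> Pset 2 F K []"
    using mem_P2[of "[c1, e']" K "t' # y"] pre by simp
  then have "e' = (\<not> c2)" using K unfolding inE_def by (cases e'; cases c2) auto
  moreover have "[c1, \<not> c2] \<in> Pset 2 F (trans F K t) []" using inE_c1d inE_next K e by blast
  ultimately show False using td1[OF Km, of t] e by auto
qed

lemma inE_okw: "inE K \<Longrightarrow> okw c1 (\<not> c2) (enc F K t)"
proof -
  assume K: "inE K"
  have Km: "K < m" using K by (simp add: inE_def)
  show ?thesis unfolding okw_def
  proof (intro impI)
    assume ne: "enc F K t \<noteq> []" and h: "hd (enc F K t) = c1"
    then obtain g where g: "enc F K t = c1 # g" by (cases "enc F K t") auto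
    show "tl (enc F K t) \<noteq> [] \<and> hd (tl (enc F K t)) = (\<not> c2)"
    proof (cases g)
      case Nil
      obtain y where y: "take 1 (fstar F (trans F K t) y) = [c2]" using P1ex trans_lt Km by blast
      then obtain u where u: "fstar F (trans F K t) y = c2 # u"
        by (cases "fstar F (trans F K t) y") auto
      have "prefix [c1, c2] (fstar F K (t # y))" using g Nil u by simp
      then have "[c1, c2] \<in> Pset 2 F K []" using mem_P2 by fastforce
      then show ?thesis using K by (simp add: inE_def)
    next
      case (Cons e g')
      have "prefix [c1, e] (fstar F K [t])" using g Cons by simp
      then have "[c1, e] \<in> Pset 2 F K []" using mem_P2 by fastforce
      then have "e \<noteq> c2" using K inE_def by blast
      then have "e = (\<not> c2)" by blast
      then show ?thesis using g Cons by simp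
    qed
  qed
qed

definition hasE :: "nat \<Rightarrow> bool" where "hasE K \<longleftrightarrow> (\<exists>t. enc F K t = [])"

definition nxt :: "nat \<Rightarrow> nat" where "nxt K = trans F K (SOME t. enc F K t = [])"

lemma nxt_eq: "inE K \<Longrightarrow> enc F K t = [] \<Longrightarrow> nxt K = trans F K t"
  unfolding nxt_def by (metis (mono_tags, lifting) someI_ex inE_uniq_empty)

lemma path_term: "inE K \<Longrightarrow> take 1 (fstar F K x) = [c1] \<Longrightarrow> \<exists>n. \<not> hasE ((nxt ^^ n) K)"
proof (induction x arbitrary: K)
  case Nil then show ?case by simp
next
  case (Cons t x)
  show ?case
  proof (cases "hasE K")
    case False
    then show ?thesis by (metis funpow_0)
  next
    case True
    then obtain t0 where t0: "enc F K t0 = []" unfolding hasE_def by blast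
    show ?thesis
    proof (cases "enc F K t = []")
      case False
      then have "enc F K t = c1 # tl (enc F K t)" using Cons.prems(2) by (cases "enc F K t") auto
      then show ?thesis using inE_empty_noc1[OF Cons.prems(1) t0, of t "tl (enc F K t)"] by blast
    next
      case True
      have "nxt K = trans F K t" using nxt_eq[OF Cons.prems(1) True] .
      moreover have "inE (trans F K t)" using inE_next[OF Cons.prems(1) True] .
      moreover have "take 1 (fstar F (trans F K t) x) = [c1]" using Cons.prems(2) True by simp
      ultimately obtain n where "\<not> hasE ((nxt ^^ n) (nxt K))" using Cons.IH by metis
      then have "\<not> hasE ((nxt ^^ Suc n) K)" by (simp add: funpow_Suc_right del: funpow.simps)
      then show ?thesis by blast
    qed
  qed
qed

definition kk :: "nat \<Rightarrow> nat" where "kk n = (nxt ^^ n) j"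

definition r :: nat where "r = (LEAST n. \<not> hasE (kk n))"

lemma ex_r: "\<exists>n. \<not> hasE (kk n)"
  using P1ex[OF j_lt, of c1] path_term[OF inE_j] unfolding kk_def by blast

lemma kk_r: "\<not> hasE (kk r)"
  unfolding r_def using ex_r by (rule LeastI_ex)

lemma lt_r: "n < r \<Longrightarrow> hasE (kk n)"
  unfolding r_def using not_less_Least by blast

lemma kk_0: "kk 0 = j" by (simp add: kk_def)

lemma kk_Suc: "kk (Suc n) = nxt (kk n)" by (simp add: kk_def)

lemma kk_inE: "n \<le> r \<Longrightarrow> inE (kk n)"
proof (induction n)
  case 0 then show ?case using inE_j kk_0 by simp
next
  case (Suc n)
  then have "hasE (kk n)" using lt_r by simp
  then obtain t where t: "enc F (kk n) t = []" unfolding hasE_def by blast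
  have "inE (kk n)" using Suc by simp
  then show ?case using kk_Suc nxt_eq inE_next t by metis
qed

lemma kk_lt: "n \<le> r \<Longrightarrow> kk n < m" using kk_inE inE_def by blast

lemma kk_next: "n < r \<Longrightarrow> enc F (kk n) t = [] \<Longrightarrow> trans F (kk n) t = kk (Suc n)"
  using kk_Suc nxt_eq kk_inE by simp

lemma kk_noc1: "n < r \<Longrightarrow> enc F (kk n) t \<noteq> [] \<Longrightarrow> hd (enc F (kk n) t) \<noteq> c1"
proof
  assume n: "n < r" and ne: "enc F (kk n) t \<noteq> []" and h: "hd (enc F (kk n) t) = c1"
  obtain t0 where t0: "enc F (kk n) t0 = []" using lt_r[OF n] unfolding hasE_def by blast
  show False using inE_empty_noc1[OF kk_inE t0, of t "tl (enc F (kk n) t)"] n ne h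
    by (cases "enc F (kk n) t") auto
qed

lemma kk_r_c1: "\<exists>t g. enc F (kk r) t = c1 # g \<and> g \<noteq> []"
proof -
  obtain x where x: "take 1 (fstar F (kk r) x) = [c1]" using P1ex kk_lt by blast
  then obtain t y where xt: "x = t # y" by (cases x) auto
  have "enc F (kk r) t \<noteq> []" using kk_r unfolding hasE_def by blast
  then obtain g where g: "enc F (kk r) t = c1 # g" using x xt by (cases "enc F (kk r) t") auto
  then have "g \<noteq> []" using inE_okw[OF kk_inE[of r], of t] by (simp add: okw_def)
  then show ?thesis using g by blast
qed

lemma encis_ne: "enc F i s \<noteq> []"
proof
  assume e: "enc F i s = []"
  obtain s' where s': "s' \<noteq> s"
  proof -
    have "\<not> (UNIV :: 's set) \<subseteq> {s}"
    proof
      assume "(UNIV :: 's set) \<subseteq> {s}"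
      then have "card (UNIV :: 's set) \<le> card {s}" by (intro card_mono) auto
      then show False using card2 by simp
    qed
    then show ?thesis using that by blast
  qed
  have "Sset F i (enc F i s) = {s}" using uniq
    by (metis (mono_tags, lifting) Sset_def card_1_singletonE mem_Collect_eq singletonD)
  then have "enc F i s' \<noteq> []" using s' e unfolding Sset_def by auto
  then have "strict_prefix [] (enc F i s')" by (simp add: strict_prefix_def)
  then have "[] \<in> Pbar 0 F i (enc F i s)" unfolding Pbar_char e by auto
  then show False using nobar by simp
qed

lemma Sset_single: "enc F i t = enc F i s \<Longrightarrow> t = s"
proof -
  assume "enc F i t = enc F i s"
  moreover have "Sset F i (enc F i s) = {s}" using uniq
    by (metis (mono_tags, lifting) Sset_def card_1_singletonE mem_Collect_eq singletonD)
  ultimately show "t = s" unfolding Sset_def by auto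
qed

end



context L15 begin

definition Fp :: "'s code_tuple" where
  "Fp = \<lparr>ntab = m + r + 1,
     enc = (\<lambda>a t. if a < m then enc F a t else phi c1 (enc F (kk (a - m)) t)),
     trans = (\<lambda>a t. if a < m then (if a = i \<and> t = s then m else trans F a t)
               else if enc F (kk (a - m)) t = [] then Suc a else trans F (kk (a - m)) t)\<rparr>"

lemma Fp_ntab[simp]: "ntab Fp = m + r + 1" by (simp add: Fp_def)
lemma Fp_enc_o: "a < m \<Longrightarrow> enc Fp a t = enc F a t" by (simp add: Fp_def)
lemma Fp_enc_c: "enc Fp (m + n) t = phi c1 (enc F (kk n) t)" by (simp add: Fp_def)
lemma Fp_trans_o: "a < m \<Longrightarrow> trans Fp a t = (if a = i \<and> t = s then m else trans F a t)"
  by (simp add: Fp_def)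
lemma Fp_trans_c: "trans Fp (m + n) t =
    (if enc F (kk n) t = [] then m + Suc n else trans F (kk n) t)"
  by (simp add: Fp_def)

lemma take1_take2: "take 1 (take 2 w) = take 1 w" by simp

lemma Fp_lang:
  "(\<forall>a<m. \<exists>x'. take 2 (fstar Fp a x) = take 2 (fstar F a x')) \<and>
   (\<forall>n\<le>r. \<exists>x'. take 2 (fstar Fp (m + n) x) = take 2 (phi c1 (fstar F (kk n) x')))"
proof (induction x)
  case Nil
  show ?case by (metis fstar.simps(1) phi_Nil)
next
  case (Cons t y)
  note IH1 = conjunct1[OF Cons.IH] and IH2 = conjunct2[OF Cons.IH]
  have P1: "\<exists>x'. take 2 (fstar Fp a (t # y)) = take 2 (fstar F a x')" if a: "a < m" for a
  proof (cases "a = i \<and> t = s")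
    case True
    obtain x' where x': "take 2 (fstar Fp (m + 0) y) = take 2 (phi c1 (fstar F (kk 0) x'))"
      using IH2 by blast
    have "take 1 (fstar Fp m y) = take 1 (fstar F j x')"
      using arg_cong[OF x', of "take 1"] by (simp add: phi_take1' kk_0)
    then have "take 2 (enc F i s @ fstar Fp m y) = take 2 (enc F i s @ fstar F j x')"
      by (rule take2_app1[OF encis_ne])
    then have "take 2 (fstar Fp a (t # y)) = take 2 (fstar F a (s # x'))"
      using True a by (simp add: Fp_enc_o Fp_trans_o)
    then show ?thesis by blast
  next
    case False
    have tr: "trans Fp a t = trans F a t" using False a by (auto simp: Fp_trans_o)
    obtain x' where x': "take 2 (fstar Fp (trans F a t) y) = take 2 (fstar F (trans F a t) x')"
      using IH1 trans_lt[OF a] by blast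
    have "take 2 (fstar Fp a (t # y)) = take 2 (fstar F a (t # x'))"
      using take2_app2[OF x', of "enc F a t"] a tr by (simp add: Fp_enc_o)
    then show ?thesis by blast
  qed
  have P2: "\<exists>x'. take 2 (fstar Fp (m + n) (t # y)) = take 2 (phi c1 (fstar F (kk n) x'))"
    if n: "n \<le> r" for n
  proof (cases "enc F (kk n) t = []")
    case True
    then have nr: "n < r" using kk_r n unfolding hasE_def by (metis le_neq_implies_less)
    obtain x' where x': "take 2 (fstar Fp (m + Suc n) y) = take 2 (phi c1 (fstar F (kk (Suc n)) x'))"
      using IH2 nr by (meson Suc_leI)
    have "fstar F (kk n) (t # x') = fstar F (kk (Suc n)) x'" using True kk_next[OF nr True] by simp
    then have "take 2 (fstar Fp (m + n) (t # y)) = take 2 (phi c1 (fstar F (kk n) (t # x')))"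
      using x' True by (simp add: Fp_enc_c Fp_trans_c)
    then show ?thesis by blast
  next
    case False
    have tr: "trans Fp (m + n) t = trans F (kk n) t" using False by (simp add: Fp_trans_c)
    obtain x' where x': "take 2 (fstar Fp (trans F (kk n) t) y) = take 2 (fstar F (trans F (kk n) t) x')"
      using IH1 trans_lt kk_lt[OF n] by blast
    have ok: "okw c1 (\<not> c2) (enc F (kk n) t)" using inE_okw kk_inE[OF n] by blast
    have "take 2 (fstar Fp (m + n) (t # y)) = take 2 (phi c1 (enc F (kk n) t) @ fstar F (trans F (kk n) t) x')"
      using take2_app2[OF x'] tr by (simp add: Fp_enc_c)
    also have "\<dots> = take 2 (phi c1 (fstar F (kk n) (t # x')))"
      using phi_app[OF False ok] by simp
    finally show ?thesis by blast
  qed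
  show ?case using P1 P2 by blast
qed

lemma Fp_T1_o: "a < m \<Longrightarrow> \<exists>x'. take 1 (fstar Fp a x) = take 1 (fstar F a x')"
  using Fp_lang take1_take2 by metis

lemma Fp_T1_c: "n \<le> r \<Longrightarrow> \<exists>x'. take 1 (fstar Fp (m + n) x) = take 1 (fstar F (kk n) x')"
  using Fp_lang take1_take2 phi_take1 by metis

lemma Fp_P2_o: "a < m \<Longrightarrow> Pset 2 Fp a [] \<subseteq> Pset 2 F a []"
proof
  fix c assume a: "a < m" and "c \<in> Pset 2 Fp a []"
  then obtain x where c: "length c = 2" "prefix c (fstar Fp a x)" by (auto simp: Pset_nil)
  obtain x' where "take 2 (fstar Fp a x) = take 2 (fstar F a x')" using Fp_lang a by blast
  then have "prefix c (fstar F a x')" using c prefix_take_iff by metis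
  then show "c \<in> Pset 2 F a []" using c mem_P2 by blast
qed

lemma Fp_P2_c: "n \<le> r \<Longrightarrow> c \<in> Pset 2 Fp (m + n) [] \<Longrightarrow> hd c \<noteq> c1 \<Longrightarrow> c \<in> Pset 2 F (kk n) []"
proof -
  assume n: "n \<le> r" and "c \<in> Pset 2 Fp (m + n) []" and h: "hd c \<noteq> c1"
  then obtain x where c: "length c = 2" "prefix c (fstar Fp (m + n) x)" by (auto simp: Pset_nil)
  obtain x' where x': "take 2 (fstar Fp (m + n) x) = take 2 (phi c1 (fstar F (kk n) x'))"
    using Fp_lang n by blast
  let ?w = "fstar F (kk n) x'"
  have c2: "c = take 2 (phi c1 ?w)" using c x' prefix_take_iff by metis
  then have "phi c1 ?w \<noteq> []" using c by auto
  then have "?w \<noteq> []" by simp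
  have "hd c = hd (phi c1 ?w)" using c2 c by (cases "phi c1 ?w") auto
  then have "hd ?w \<noteq> c1" using h phi_hd[OF \<open>?w \<noteq> []\<close>] by simp
  then have "phi c1 ?w = ?w" by (intro phi_id) auto
  then have "prefix c ?w" using c2 c prefix_take_iff by (metis length_take)
  then show ?thesis using c mem_P2 by blast
qed

lemma Fp_Pbar_o: "a < m \<Longrightarrow> Pbar 2 Fp a b \<subseteq> Pbar 2 F a b"
proof
  fix c assume a: "a < m" and "c \<in> Pbar 2 Fp a b"
  then obtain t y where c: "length c = 2" "strict_prefix b (enc Fp a t)"
    "prefix (b @ c) (enc Fp a t @ take 1 (fstar Fp (trans Fp a t) y))"
    unfolding Pbar_char1 by blast
  have "\<exists>y'. take 1 (fstar Fp (trans Fp a t) y) = take 1 (fstar F (trans F a t) y')"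
  proof (cases "a = i \<and> t = s")
    case True
    then have "trans Fp a t = m + 0" "trans F a t = kk 0" using a by (simp_all add: Fp_trans_o kk_0)
    then show ?thesis using Fp_T1_c[of 0 y] by simp
  next
    case False
    then have "trans Fp a t = trans F a t" using a by (auto simp: Fp_trans_o)
    then show ?thesis using Fp_T1_o[of "trans F a t" y] a trans_lt by simp
  qed
  then obtain y' where "take 1 (fstar Fp (trans Fp a t) y) = take 1 (fstar F (trans F a t) y')" by blast
  then show "c \<in> Pbar 2 F a b" using c a unfolding Pbar_char1 by (auto simp: Fp_enc_o)
qed

lemma Fp_Pbar_c: "n \<le> r \<Longrightarrow> Pbar 2 Fp (m + n) (phi c1 (enc F (kk n) t0)) \<subseteq> Pbar 2 F (kk n) (enc F (kk n) t0)"
proof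
  fix c assume n: "n \<le> r" and "c \<in> Pbar 2 Fp (m + n) (phi c1 (enc F (kk n) t0))"
  then obtain t y where c: "length c = 2" "strict_prefix (phi c1 (enc F (kk n) t0)) (phi c1 (enc F (kk n) t))"
    "prefix (phi c1 (enc F (kk n) t0) @ c) (phi c1 (enc F (kk n) t) @ take 1 (fstar Fp (trans Fp (m + n) t) y))"
    unfolding Pbar_char1 by (auto simp: Fp_enc_c)
  have gne: "enc F (kk n) t \<noteq> []" using c(2) by auto
  then have tr: "trans Fp (m + n) t = trans F (kk n) t" by (simp add: Fp_trans_c)
  obtain y' where y': "take 1 (fstar Fp (trans F (kk n) t) y) = take 1 (fstar F (trans F (kk n) t) y')"
    using Fp_T1_o trans_lt kk_lt[OF n] by blast
  have noc: "hd (enc F (kk n) t) \<noteq> c1" if "enc F (kk n) t0 = []"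
  proof -
    have "hasE (kk n)" using that unfolding hasE_def by blast
    then have "n < r" using kk_r n by (metis le_neq_implies_less)
    then show ?thesis using kk_noc1 gne by blast
  qed
  have "strict_prefix (enc F (kk n) t0) (enc F (kk n) t) \<and>
        prefix (enc F (kk n) t0 @ c) (enc F (kk n) t @ take 1 (fstar F (trans F (kk n) t) y'))"
    using phi_pbar[OF inE_okw[OF kk_inE[OF n]] inE_okw[OF kk_inE[OF n]] noc gne c(2)] c(3) tr y'
    by simp
  then show "c \<in> Pbar 2 F (kk n) (enc F (kk n) t0)" using c(1) unfolding Pbar_char1 by blast
qed

lemma Pbar_nil_hd: "n < r \<Longrightarrow> c \<in> Pbar 2 F (kk n) [] \<Longrightarrow> hd c \<noteq> c1"
proof -
  assume n: "n < r" and "c \<in> Pbar 2 F (kk n) []"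
  then obtain t y where c: "length c = 2" "strict_prefix [] (enc F (kk n) t)"
    "prefix c (enc F (kk n) t @ fstar F (trans F (kk n) t) y)"
    unfolding Pbar_char by auto
  have ne: "enc F (kk n) t \<noteq> []" using c(2) by auto
  have "hd c = hd (enc F (kk n) t)" using c(1,3) ne
    by (cases c; cases "enc F (kk n) t") auto
  then show ?thesis using kk_noc1[OF n ne] by simp
qed

lemma Fp_ct: "is_code_tuple Fp"
  unfolding is_code_tuple_def
proof (intro conjI allI impI)
  show "1 \<le> ntab Fp" by simp
  fix a t assume a: "a < ntab Fp"
  show "trans Fp a t < ntab Fp"
  proof (cases "a < m")
    case True
    show ?thesis
    proof (cases "a = i \<and> t = s")
      case True
      then show ?thesis using \<open>a < m\<close> by (auto simp: Fp_trans_o)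
    next
      case False
      then have "trans Fp a t = trans F a t" using \<open>a < m\<close> by (auto simp: Fp_trans_o)
      moreover have "trans F a t < m" by (rule trans_lt[OF \<open>a < m\<close>])
      ultimately show ?thesis by simp
    qed
  next
    case False
    define n where "n = a - m"
    have an: "a = m + n" using False n_def by simp
    have n: "n \<le> r" using a an by simp
    show ?thesis
    proof (cases "enc F (kk n) t = []")
      case True
      then have "n < r" using kk_r n unfolding hasE_def by (metis le_neq_implies_less)
      then show ?thesis using True an by (simp add: Fp_trans_c)
    next
      case False
      moreover have "trans F (kk n) t < m" by (rule trans_lt[OF kk_lt[OF n]])
      ultimately show ?thesis using an by (simp add: Fp_trans_c)
    qed
  qed
qed

end



context L15 begin

lemma copy_idx: "a < ntab Fp \<Longrightarrow> \<not> a < m \<Longrightarrow> \<exists>n. a = m + n \<and> n \<le> r"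
  by (rule exI[of _ "a - m"]) auto

lemma Fp_td1: "a < ntab Fp \<Longrightarrow> Pset 2 Fp (trans Fp a t) [] \<inter> Pbar 2 Fp a (enc Fp a t) = {}"
proof (cases "a < m")
  case True
  show ?thesis
  proof (cases "a = i \<and> t = s")
    case True
    have "Pbar 2 Fp a (enc Fp a t) = {}"
    proof (rule ccontr)
      assume "Pbar 2 Fp a (enc Fp a t) \<noteq> {}"
      then obtain c t' y where "strict_prefix (enc Fp a t) (enc Fp a t')"
        unfolding Pbar_char by blast
      then have "strict_prefix (enc F i s) (enc F i t')" using True \<open>a < m\<close> by (simp add: Fp_enc_o)
      then have "[] \<in> Pbar 0 F i (enc F i s)" unfolding Pbar_char by auto
      then show False using nobar by simp
    qed
    then show ?thesis by simp
  next
    case False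
    have tr: "trans Fp a t = trans F a t" using False \<open>a < m\<close> by (auto simp: Fp_trans_o)
    have "Pset 2 Fp (trans Fp a t) [] \<subseteq> Pset 2 F (trans F a t) []"
      unfolding tr by (rule Fp_P2_o[OF trans_lt[OF \<open>a < m\<close>]])
    moreover have "Pbar 2 Fp a (enc Fp a t) \<subseteq> Pbar 2 F a (enc F a t)"
      using Fp_Pbar_o[OF \<open>a < m\<close>] \<open>a < m\<close> by (simp add: Fp_enc_o)
    ultimately show ?thesis using td1[OF \<open>a < m\<close>, of t] by blast
  qed
next
  case False
  assume a: "a < ntab Fp"
  obtain n where an: "a = m + n" and n: "n \<le> r" using copy_idx[OF a False] by blast
  have pb: "Pbar 2 Fp a (enc Fp a t) \<subseteq> Pbar 2 F (kk n) (enc F (kk n) t)"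
    using Fp_Pbar_c[OF n, of t] an by (simp add: Fp_enc_c)
  show ?thesis
  proof (cases "enc F (kk n) t = []")
    case True
    then have nr: "n < r" using kk_r n unfolding hasE_def by (metis le_neq_implies_less)
    have tr: "trans Fp a t = m + Suc n" using True an by (simp add: Fp_trans_c)
    show ?thesis
    proof (rule ccontr)
      assume "Pset 2 Fp (trans Fp a t) [] \<inter> Pbar 2 Fp a (enc Fp a t) \<noteq> {}"
      moreover have "Pbar 2 Fp a (enc Fp a t) \<subseteq> Pbar 2 F (kk n) []" using pb True by simp
      ultimately obtain c where c1: "c \<in> Pset 2 Fp (m + Suc n) []" and c2': "c \<in> Pbar 2 F (kk n) []"
        unfolding tr by blast
      have "hd c \<noteq> c1" using Pbar_nil_hd[OF nr c2'] .
      then have "c \<in> Pset 2 F (kk (Suc n)) []" using Fp_P2_c[OF _ c1] nr by simp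
      then have "c \<in> Pset 2 F (trans F (kk n) t) []" using kk_next[OF nr True] by simp
      moreover have "Pset 2 F (trans F (kk n) t) [] \<inter> Pbar 2 F (kk n) [] = {}"
        using td1[OF kk_lt[OF n], of t] True by simp
      ultimately show False using c2' by blast
    qed
  next
    case False
    have tr: "trans Fp a t = trans F (kk n) t" using False an by (simp add: Fp_trans_c)
    have "Pset 2 Fp (trans Fp a t) [] \<subseteq> Pset 2 F (trans F (kk n) t) []"
      unfolding tr by (rule Fp_P2_o[OF trans_lt[OF kk_lt[OF n]]])
    then show ?thesis using pb td1[OF kk_lt[OF n], of t] by blast
  qed
qed

lemma Fp_td2: "a < ntab Fp \<Longrightarrow> t \<noteq> t' \<Longrightarrow> enc Fp a t = enc Fp a t' \<Longrightarrow>
    Pset 2 Fp (trans Fp a t) [] \<inter> Pset 2 Fp (trans Fp a t') [] = {}"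
proof (cases "a < m")
  case True
  assume ne: "t \<noteq> t'" and e: "enc Fp a t = enc Fp a t'"
  have e': "enc F a t = enc F a t'" using e True by (simp add: Fp_enc_o)
  have "\<not> (a = i \<and> t = s)" using Sset_single ne e' by metis
  moreover have "\<not> (a = i \<and> t' = s)" using Sset_single ne e' by metis
  ultimately have tr: "trans Fp a t = trans F a t" "trans Fp a t' = trans F a t'"
    using True by (auto simp: Fp_trans_o)
  show ?thesis unfolding tr
    using Fp_P2_o[OF trans_lt[OF True], of t] Fp_P2_o[OF trans_lt[OF True], of t'] td2[OF True ne e']
    by blast
next
  case False
  assume a: "a < ntab Fp" and ne: "t \<noteq> t'" and e: "enc Fp a t = enc Fp a t'"
  obtain n where an: "a = m + n" and n: "n \<le> r" using copy_idx[OF a False] by blast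
  have "phi c1 (enc F (kk n) t) = phi c1 (enc F (kk n) t')" using e an by (simp add: Fp_enc_c)
  then have e': "enc F (kk n) t = enc F (kk n) t'"
    using phi_inj inE_okw[OF kk_inE[OF n]] by blast
  have nn: "enc F (kk n) t \<noteq> []" using inE_uniq_empty[OF kk_inE[OF n]] e' ne by metis
  then have tr: "trans Fp a t = trans F (kk n) t" "trans Fp a t' = trans F (kk n) t'"
    using an e' by (simp_all add: Fp_trans_c)
  show ?thesis unfolding tr
    using Fp_P2_o[OF trans_lt[OF kk_lt[OF n]], of t] Fp_P2_o[OF trans_lt[OF kk_lt[OF n]], of t']
      td2[OF kk_lt[OF n] ne e']
    by blast
qed

lemma Fp_td: "two_dec Fp"
  unfolding two_dec_def using Fp_td1 Fp_td2 by blast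

lemma Fp_ne_ext: "a < ntab Fp \<Longrightarrow> \<exists>x. fstar Fp a x \<noteq> []"
proof -
  have o: "\<forall>a<m. fstar F a x \<noteq> [] \<longrightarrow> (\<exists>x'. fstar Fp a x' \<noteq> [])" for x
  proof (induction x)
    case Nil then show ?case by simp
  next
    case (Cons t y)
    show ?case
    proof (intro allI impI)
      fix a assume a: "a < m" and ne: "fstar F a (t # y) \<noteq> []"
      show "\<exists>x'. fstar Fp a x' \<noteq> []"
      proof (cases "enc F a t = []")
        case False
        then have "fstar Fp a [t] \<noteq> []" using a by (simp add: Fp_enc_o)
        then show ?thesis by blast
      next
        case True
        then have "\<not> (a = i \<and> t = s)" using encis_ne by auto
        then have tr: "trans Fp a t = trans F a t" using a by (auto simp: Fp_trans_o)
        have "fstar F (trans F a t) y \<noteq> []" using ne True by simp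
        then obtain x' where "fstar Fp (trans F a t) x' \<noteq> []" using Cons.IH trans_lt[OF a] by blast
        then have "fstar Fp a (t # x') \<noteq> []" using True tr a by (simp add: Fp_enc_o)
        then show ?thesis by blast
      qed
    qed
  qed
  have c: "k \<le> r \<Longrightarrow> \<exists>x. fstar Fp (m + (r - k)) x \<noteq> []" for k
  proof (induction k)
    case 0
    obtain t :: 's where True by blast
    have "enc F (kk r) t \<noteq> []" using kk_r unfolding hasE_def by blast
    then have "fstar Fp (m + (r - 0)) [t] \<noteq> []" by (simp add: Fp_enc_c)
    then show ?case by blast
  next
    case (Suc k)
    define nn where "nn = r - Suc k"
    have nr: "nn < r" using Suc.prems nn_def by simp
    obtain t where t: "enc F (kk nn) t = []" using lt_r[OF nr] unfolding hasE_def by blast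
    have "k \<le> r" using Suc.prems by simp
    then obtain x where x: "fstar Fp (m + (r - k)) x \<noteq> []" using Suc.IH by blast
    have sn: "Suc nn = r - k" using Suc.prems nn_def by simp
    have eq: "fstar Fp (m + nn) (t # x) = fstar Fp (m + Suc nn) x"
      using t by (simp add: Fp_enc_c Fp_trans_c)
    have "fstar Fp (m + nn) (t # x) \<noteq> []" using x unfolding eq sn .
    then show ?case unfolding nn_def by blast
  qed
  assume a: "a < ntab Fp"
  show ?thesis
  proof (cases "a < m")
    case True
    then show ?thesis using o ext_any by blast
  next
    case False
    obtain n where an: "a = m + n" and n: "n \<le> r" using copy_idx[OF a False] by blast
    then show ?thesis using c[of "r - n"] by simp
  qed
qed

lemma Fp_ext: "ext Fp"
  unfolding ext_def
proof (intro allI impI)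
  fix a assume "a < ntab Fp"
  then obtain x where x: "fstar Fp a x \<noteq> []" using Fp_ne_ext by blast
  have "prefix [hd (fstar Fp a x)] (fstar Fp a x)" using x by (cases "fstar Fp a x") auto
  then have "[hd (fstar Fp a x)] \<in> Pset 1 Fp a []" by (auto simp: Pset_nil)
  then show "Pset 1 Fp a [] \<noteq> {}" by blast
qed

end



context L15 begin

abbreviation "m' \<equiv> ntab Fp"

definition pr :: "nat \<Rightarrow> nat" where "pr a = (if a < m then a else kk (a - m))"

definition fib :: "nat \<Rightarrow> nat set" where "fib k = {a \<in> {..<m'}. pr a = k}"

definition NN :: "nat \<Rightarrow> nat set" where "NN k = {n. n \<le> r \<and> kk n = k}"

lemma pr_o: "a < m \<Longrightarrow> pr a = a" by (simp add: pr_def)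
lemma pr_c: "pr (m + n) = kk n" by (simp add: pr_def)
lemma pr_c': "pr (Suc (m + n)) = kk (Suc n)" using pr_c[of "Suc n"] by simp

lemma pr_lt: "a < m' \<Longrightarrow> pr a < m"
proof (cases "a < m")
  case True then show ?thesis by (simp add: pr_def)
next
  case False
  assume a: "a < m'"
  obtain n where "a = m + n" "n \<le> r" using copy_idx[OF a False] by blast
  then show ?thesis using kk_lt by (simp add: pr_c)
qed

lemma pr_trans: "a < m' \<Longrightarrow> pr (trans Fp a t) = trans F (pr a) t"
proof (cases "a < m")
  case True
  show ?thesis
  proof (cases "a = i \<and> t = s")
    case True
    then show ?thesis using \<open>a < m\<close> pr_c[of 0] by (simp add: Fp_trans_o pr_o kk_0)
  next
    case False
    then have "trans Fp a t = trans F a t" using \<open>a < m\<close> by (auto simp: Fp_trans_o)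
    then show ?thesis using trans_lt[OF \<open>a < m\<close>] \<open>a < m\<close> by (simp add: pr_o)
  qed
next
  case False
  assume a: "a < m'"
  obtain n where an: "a = m + n" and n: "n \<le> r" using copy_idx[OF a False] by blast
  show ?thesis
  proof (cases "enc F (kk n) t = []")
    case True
    then have nr: "n < r" using kk_r n unfolding hasE_def by (metis le_neq_implies_less)
    then show ?thesis using True an kk_next[OF nr True] by (simp add: Fp_trans_c pr_c pr_c')
  next
    case False
    then show ?thesis using an trans_lt[OF kk_lt[OF n]] by (simp add: Fp_trans_c pr_c pr_o)
  qed
qed

lemma Qfib: "a < m' \<Longrightarrow> Qmat mu F (pr a) k = (\<Sum>b\<in>fib k. Qmat mu Fp a b)"
proof -
  assume a: "a < m'"
  have "(\<Sum>b\<in>fib k. Qmat mu Fp a b) = (\<Sum>t\<in>UNIV. if trans Fp a t \<in> fib k then mu t else 0)"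
    by (rule Qmat_fiber) (simp add: fib_def)
  also have "\<dots> = (\<Sum>t\<in>UNIV. if trans F (pr a) t = k then mu t else 0)"
  proof (rule sum.cong)
    fix t
    have "trans Fp a t < m'" using Fp_ct a unfolding is_code_tuple_def by blast
    then show "(if trans Fp a t \<in> fib k then mu t else 0) = (if trans F (pr a) t = k then mu t else 0)"
      using pr_trans[OF a] by (simp add: fib_def)
  qed simp
  finally show ?thesis by (simp add: Qmat_alt)
qed

lemma group_fib: "(\<Sum>k<m. \<Sum>a\<in>fib k. h a) = (\<Sum>a<m'. h a)"
  unfolding fib_def by (rule sum.group) (use pr_lt in auto)

lemma fib_sum: "k < m \<Longrightarrow> (\<Sum>a\<in>fib k. h a) = h k + (\<Sum>n\<in>NN k. h (m + n))"
proof -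
  assume k: "k < m"
  have eq: "fib k = insert k ((\<lambda>n. m + n) ` NN k)"
  proof (rule set_eqI; rule iffI)
    fix a assume "a \<in> fib k"
    then have a: "a < m'" "pr a = k" by (auto simp: fib_def)
    show "a \<in> insert k ((\<lambda>n. m + n) ` NN k)"
    proof (cases "a < m")
      case True then show ?thesis using a by (simp add: pr_o)
    next
      case False
      obtain n where "a = m + n" "n \<le> r" using copy_idx[OF a(1) False] by blast
      then show ?thesis using a by (auto simp: pr_c NN_def)
    qed
  next
    fix a assume "a \<in> insert k ((\<lambda>n. m + n) ` NN k)"
    then show "a \<in> fib k" using k by (auto simp: fib_def NN_def pr_o pr_c)
  qed
  have "k \<notin> (\<lambda>n. m + n) ` NN k" using k by auto
  moreover have "finite (NN k)" by (simp add: NN_def)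
  ultimately show ?thesis unfolding eq by (simp add: sum.reindex)
qed

lemma proj_stat:
  assumes st: "stationary mu Fp q"
  shows "stationary mu F (\<lambda>k. if k < m then (\<Sum>a\<in>fib k. q a) else 0)"
proof -
  have qe: "\<And>b. b < m' \<Longrightarrow> (\<Sum>a<m'. q a * Qmat mu Fp a b) = q b" and q1: "(\<Sum>a<m'. q a) = 1"
    using st unfolding stationary_def by auto
  show ?thesis unfolding stationary_def
  proof (intro conjI allI impI)
    show "\<And>j. m \<le> j \<Longrightarrow> (if j < m then sum q (fib j) else 0) = 0" by simp
    show "(\<Sum>l<m. (if l < m then sum q (fib l) else 0)) = 1" using group_fib[of q] q1 by simp
    fix k assume k: "k < m"
    have "(\<Sum>l<m. (if l < m then sum q (fib l) else 0) * Qmat mu F l k)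
        = (\<Sum>l<m. \<Sum>a\<in>fib l. q a * Qmat mu F (pr a) k)"
      by (rule sum.cong) (auto simp: sum_distrib_right fib_def)
    also have "\<dots> = (\<Sum>a<m'. q a * Qmat mu F (pr a) k)" by (rule group_fib)
    also have "\<dots> = (\<Sum>a<m'. \<Sum>b\<in>fib k. q a * Qmat mu Fp a b)"
      by (rule sum.cong) (auto simp: Qfib sum_distrib_left)
    also have "\<dots> = (\<Sum>b\<in>fib k. \<Sum>a<m'. q a * Qmat mu Fp a b)" by (rule sum.swap)
    also have "\<dots> = (\<Sum>b\<in>fib k. q b)"
    proof (rule sum.cong[OF refl])
      fix x assume "x \<in> fib k"
      then have "x < m'" by (simp add: fib_def)
      then show "(\<Sum>a<m'. q a * Qmat mu Fp a x) = q x" by (rule qe)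
    qed
    finally show "(\<Sum>l<m. (if l < m then sum q (fib l) else 0) * Qmat mu F l k) =
        (if k < m then sum q (fib k) else 0)" using k by simp
  qed
qed

lemma lift_stat:
  assumes q0: "\<And>a. m' \<le> a \<Longrightarrow> q a = 0"
    and qf: "\<And>k. k < m \<Longrightarrow> (\<Sum>a\<in>fib k. q a) = p k"
    and qc: "\<And>b. m \<le> b \<Longrightarrow> b < m' \<Longrightarrow> (\<Sum>a<m'. q a * Qmat mu Fp a b) = q b"
    and st: "stationary mu F p"
  shows "stationary mu Fp q"
proof -
  have pe: "\<And>b. b < m \<Longrightarrow> (\<Sum>l<m. p l * Qmat mu F l b) = p b" and p1: "(\<Sum>l<m. p l) = 1"
    using st unfolding stationary_def by auto
  let ?inf = "\<lambda>b. (\<Sum>a<m'. q a * Qmat mu Fp a b)"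
  show ?thesis unfolding stationary_def
  proof (intro conjI allI impI)
    show "\<And>a. m' \<le> a \<Longrightarrow> q a = 0" by (rule q0)
    show "(\<Sum>a<m'. q a) = 1" using group_fib[of q] qf p1 by simp
    fix b assume b: "b < m'"
    show "?inf b = q b"
    proof (cases "b < m")
      case False then show ?thesis using qc b by simp
    next
      case True
      have "(\<Sum>c\<in>fib b. ?inf c) = (\<Sum>a<m'. \<Sum>c\<in>fib b. q a * Qmat mu Fp a c)" by (rule sum.swap)
      also have "\<dots> = (\<Sum>a<m'. q a * Qmat mu F (pr a) b)"
        by (rule sum.cong) (auto simp: Qfib sum_distrib_left)
      also have "\<dots> = (\<Sum>l<m. \<Sum>a\<in>fib l. q a * Qmat mu F (pr a) b)" by (rule group_fib[symmetric])
      also have "\<dots> = (\<Sum>l<m. p l * Qmat mu F l b)"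
        by (rule sum.cong) (auto simp: qf[symmetric] sum_distrib_right fib_def)
      also have "\<dots> = p b" using pe True by simp
      finally have A: "(\<Sum>c\<in>fib b. ?inf c) = (\<Sum>c\<in>fib b. q c)" using qf True by simp
      have B: "(\<Sum>n\<in>NN b. ?inf (m + n)) = (\<Sum>n\<in>NN b. q (m + n))"
      proof (rule sum.cong[OF refl])
        fix x assume "x \<in> NN b"
        then have "m \<le> m + x" "m + x < m'" by (auto simp: NN_def)
        then show "?inf (m + x) = q (m + x)" by (rule qc)
      qed
      show ?thesis using A B fib_sum[OF True, of ?inf] fib_sum[OF True, of q] by simp
    qed
  qed
qed

end



context L15 begin

lemma mu_nn: "\<forall>x. 0 \<le> mu x" using mu_pos by (simp add: less_imp_le)

lemma sum_delta_mult: "(c::nat) < M \<Longrightarrow> (\<Sum>a<M. f a * (if a = c then v else 0)) = f c * (v::real)"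
proof -
  assume c: "c < M"
  have "(\<Sum>a<M. f a * (if a = c then v else 0)) = (\<Sum>a\<in>insert c ({..<M} - {c}). f a * (if a = c then v else 0))"
    using c by (simp add: insert_absorb)
  also have "\<dots> = f c * v + (\<Sum>a\<in>{..<M} - {c}. f a * (if a = c then v else 0))"
    by (subst sum.insert) auto
  also have "(\<Sum>a\<in>{..<M} - {c}. f a * (if a = c then v else 0)) = 0"
    by (rule sum.neutral) auto
  finally show ?thesis by simp
qed

lemma trans_ne1: "a < m \<Longrightarrow> trans F a t \<noteq> m" using trans_lt[of a t] by simp
lemma trans_ne2: "a < m \<Longrightarrow> trans F a t \<noteq> Suc (m + n)" using trans_lt[of a t] by simp
lemma trans_ne3: "a < m \<Longrightarrow> trans F a t \<noteq> m + Suc n" using trans_lt[of a t] by simp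

lemma Qm_m: "a < m' \<Longrightarrow> Qmat mu Fp a m = (if a = i then mu s else 0)"
proof -
  assume a: "a < m'"
  have "{t. trans Fp a t = m} = (if a = i then {s} else {})"
  proof (cases "a < m")
    case True
    then show ?thesis by (auto simp: Fp_trans_o trans_ne1)
  next
    case False
    obtain n where an: "a = m + n" and n: "n \<le> r" using copy_idx[OF a False] by blast
    have "trans Fp a t \<noteq> m" for t
      using an trans_lt[OF kk_lt[OF n], of t] by (auto simp: Fp_trans_c)
    then show ?thesis using False an i_lt by auto
  qed
  then show ?thesis unfolding Qmat_def by simp
qed

definition ee :: "nat \<Rightarrow> real" where "ee n = Qmat mu Fp (m + n) (m + Suc n)"

lemma Qm_suc: "n < r \<Longrightarrow> a < m' \<Longrightarrow> Qmat mu Fp a (m + Suc n) = (if a = m + n then ee n else 0)"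
proof -
  assume n: "n < r" and a: "a < m'"
  show ?thesis
  proof (cases "a = m + n")
    case True then show ?thesis by (simp add: ee_def)
  next
    case False
    have "{t. trans Fp a t = m + Suc n} = {}"
    proof (cases "a < m")
      case True
      then show ?thesis by (auto simp: Fp_trans_o trans_ne1 trans_ne2 trans_ne3)
    next
      case F2: False
      obtain n' where an: "a = m + n'" and n': "n' \<le> r" using copy_idx[OF a F2] by blast
      have "trans Fp a t \<noteq> m + Suc n" for t
        using an trans_lt[OF kk_lt[OF n'], of t] False by (auto simp: Fp_trans_c)
      then show ?thesis by auto
    qed
    then show ?thesis using False unfolding Qmat_def by simp
  qed
qed

lemma ee_pos: "n < r \<Longrightarrow> 0 < ee n"
proof -
  assume n: "n < r"
  obtain t where t: "enc F (kk n) t = []" using lt_r[OF n] unfolding hasE_def by blast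
  have "trans Fp (m + n) t = m + Suc n" using t by (simp add: Fp_trans_c)
  then have "mu t \<le> ee n" unfolding ee_def by (rule Qmat_ge[OF mu_nn])
  then show ?thesis using mu_pos by (meson less_le_trans)
qed

lemma ee_nn: "0 \<le> ee n" unfolding ee_def by (rule Qmat_nonneg[OF mu_nn])

definition w :: "nat \<Rightarrow> real" where "w n = mu s * (\<Prod>l<n. ee l)"

lemma w_0: "w 0 = mu s" by (simp add: w_def)
lemma w_Suc: "w (Suc n) = w n * ee n" by (simp add: w_def)
lemma w_nn: "0 \<le> w n" unfolding w_def using mu_nn ee_nn by (simp add: prod_nonneg)
lemma w_pos: "n \<le> r \<Longrightarrow> 0 < w n"
  unfolding w_def using mu_pos ee_pos by (auto intro!: prod_pos mult_pos_pos)

abbreviation "p \<equiv> stat_dist mu F"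

definition WW :: real where "WW = (\<Sum>n\<in>NN i. w n)"

lemma WW_nn: "0 \<le> WW" unfolding WW_def by (simp add: sum_nonneg w_nn)

definition qi :: real where "qi = p i / (1 + WW)"

definition qq :: "nat \<Rightarrow> real" where
  "qq a = (if a < m then p a - (\<Sum>n\<in>NN a. qi * w n) else if a < m' then qi * w (a - m) else 0)"

lemma p_stat: "stationary mu F p" by (rule stat_ok[OF rg])

lemma p_nn: "0 \<le> p a" by (rule stat_nonneg[OF ct mu_nn mu_sum rg])

lemma p_i_pos: "0 < p i"
  using stat_pos_R[OF ct mu_pos p_stat _ iR] p_nn by blast

lemma qi_eq: "p i = qi * (1 + WW)" unfolding qi_def using WW_nn by simp

lemma qq_c: "n \<le> r \<Longrightarrow> qq (m + n) = qi * w n" by (simp add: qq_def)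

lemma qq_i: "qq i = qi"
proof -
  have "qq i = p i - qi * WW" using i_lt by (simp add: qq_def WW_def sum_distrib_left)
  then show ?thesis using qi_eq by (simp add: algebra_simps)
qed

lemma qq_stat: "stationary mu Fp qq"
proof (rule lift_stat[OF _ _ _ p_stat])
  show "\<And>a. m' \<le> a \<Longrightarrow> qq a = 0" by (simp add: qq_def)
  show "(\<Sum>a\<in>fib k. qq a) = p k" if k: "k < m" for k
  proof -
    have "(\<Sum>n\<in>NN k. qq (m + n)) = (\<Sum>n\<in>NN k. qi * w n)"
      by (rule sum.cong) (auto simp: NN_def qq_c)
    then show ?thesis using fib_sum[OF k, of qq] k by (simp add: qq_def)
  qed
  show "(\<Sum>a<m'. qq a * Qmat mu Fp a b) = qq b" if b: "m \<le> b" "b < m'" for b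
  proof -
    obtain n where bn: "b = m + n" and n: "n \<le> r" using copy_idx[OF b(2)] b(1) by (metis not_less)
    show ?thesis
    proof (cases n)
      case 0
      have "(\<Sum>a<m'. qq a * Qmat mu Fp a b) = (\<Sum>a<m'. qq a * (if a = i then mu s else 0))"
        by (rule sum.cong) (auto simp: Qm_m bn 0)
      also have "\<dots> = qq i * mu s" using i_lt by (intro sum_delta_mult) simp
      also have "\<dots> = qq b" using bn 0 qq_c[of 0] by (simp add: qq_i w_0)
      finally show ?thesis .
    next
      case (Suc n')
      then have n': "n' < r" using n by simp
      have "(\<Sum>a<m'. qq a * Qmat mu Fp a b) = (\<Sum>a<m'. qq a * (if a = m + n' then ee n' else 0))"
      proof (rule sum.cong[OF refl])
        fix a assume "a \<in> {..<m'}"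
        then have a: "a < m'" by simp
        show "qq a * Qmat mu Fp a b = qq a * (if a = m + n' then ee n' else 0)"
          using Qm_suc[OF n' a] bn Suc by simp
      qed
      also have "\<dots> = qq (m + n') * ee n'" using n' by (intro sum_delta_mult) simp
      also have "\<dots> = qq b" using bn Suc qq_c[of n'] qq_c[of "Suc n'"] n' n
        by (simp add: w_Suc)
      finally show ?thesis .
    qed
  qed
qed

lemma stat_unique: "stationary mu Fp q \<Longrightarrow> q = qq"
proof -
  assume st: "stationary mu Fp q"
  have pp: "p = (\<lambda>k. if k < m then (\<Sum>a\<in>fib k. q a) else 0)"
    using stat_eq[OF rg proj_stat[OF st]] .
  have qe: "\<And>b. b < m' \<Longrightarrow> (\<Sum>a<m'. q a * Qmat mu Fp a b) = q b" and q0: "\<And>a. m' \<le> a \<Longrightarrow> q a = 0"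
    using st unfolding stationary_def by auto
  have fibq: "q k + (\<Sum>n\<in>NN k. q (m + n)) = p k" if "k < m" for k
  proof -
    have "p k = (\<Sum>a\<in>fib k. q a)" using that by (subst pp) simp
    then show ?thesis using fib_sum[OF that, of q] by simp
  qed
  have qm: "q m = q i * mu s"
  proof -
    have "q m = (\<Sum>a<m'. q a * Qmat mu Fp a m)" using qe[of m] by simp
    also have "\<dots> = (\<Sum>a<m'. q a * (if a = i then mu s else 0))"
      by (rule sum.cong) (auto simp: Qm_m)
    also have "\<dots> = q i * mu s" using i_lt by (intro sum_delta_mult) simp
    finally show ?thesis .
  qed
  have qs: "q (m + Suc n) = q (m + n) * ee n" if n: "n < r" for n
  proof -
    have "q (m + Suc n) = (\<Sum>a<m'. q a * Qmat mu Fp a (m + Suc n))" using qe[of "m + Suc n"] n by simp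
    also have "\<dots> = (\<Sum>a<m'. q a * (if a = m + n then ee n else 0))"
    proof (rule sum.cong[OF refl])
      fix a assume "a \<in> {..<m'}"
      then have a: "a < m'" by simp
      show "q a * Qmat mu Fp a (m + Suc n) = q a * (if a = m + n then ee n else 0)"
        using Qm_suc[OF n a] by simp
    qed
    also have "\<dots> = q (m + n) * ee n" using n by (intro sum_delta_mult) simp
    finally show ?thesis .
  qed
  have qw: "n \<le> r \<Longrightarrow> q (m + n) = q i * w n" for n
  proof (induction n)
    case 0 then show ?case using qm by (simp add: w_0)
  next
    case (Suc n) then show ?case using qs[of n] by (simp add: w_Suc)
  qed
  have "(\<Sum>n\<in>NN i. q (m + n)) = (\<Sum>n\<in>NN i. q i * w n)"
    by (rule sum.cong) (auto simp: NN_def qw)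
  then have "q i + (\<Sum>n\<in>NN i. q i * w n) = p i"
    using fibq[OF i_lt] by simp
  then have "q i * (1 + WW) = qi * (1 + WW)" using qi_eq
    by (simp add: WW_def sum_distrib_left algebra_simps)
  then have qiq: "q i = qi" using WW_nn by simp
  show "q = qq"
  proof
    fix a
    show "q a = qq a"
    proof (cases "a < m")
      case True
      have "(\<Sum>n\<in>NN a. q (m + n)) = (\<Sum>n\<in>NN a. qi * w n)"
        by (rule sum.cong) (auto simp: NN_def qw qiq)
      then show ?thesis using fibq[OF True] True by (simp add: qq_def)
    next
      case False
      show ?thesis
      proof (cases "a < m'")
        case True
        obtain n where an: "a = m + n" and n: "n \<le> r" using copy_idx[OF True False] by blast
        then show ?thesis using qw qiq qq_c by simp
      next
        case F2: False
        then show ?thesis using q0 by (simp add: qq_def)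
      qed
    qed
  qed
qed

lemma Fp_reg: "reg mu Fp"
  unfolding reg_def using qq_stat stat_unique by blast

lemma Fp_sd: "stat_dist mu Fp = qq" using stat_eq[OF Fp_reg qq_stat] .

lemma qq_nn: "0 \<le> qq a" using stat_nonneg[OF Fp_ct mu_nn mu_sum Fp_reg, of a] Fp_sd by simp

lemma qq_r_pos: "0 < qq (m + r)"
proof -
  have "0 < qi" unfolding qi_def using p_i_pos WW_nn by simp
  then show ?thesis using qq_c[of r] w_pos[of r] by simp
qed

definition LL :: "'s code_tuple \<Rightarrow> nat \<Rightarrow> real" where
  "LL G a = (\<Sum>t\<in>UNIV. real (length (enc G a t)) * mu t)"

lemma LL_le: "a < m' \<Longrightarrow> LL Fp a \<le> LL F (pr a)"
proof -
  assume a: "a < m'"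
  have "real (length (enc Fp a t)) \<le> real (length (enc F (pr a) t))" for t
  proof (cases "a < m")
    case True then show ?thesis by (simp add: Fp_enc_o pr_o)
  next
    case False
    obtain n where an: "a = m + n" and n: "n \<le> r" using copy_idx[OF a False] by blast
    then show ?thesis using phi_len by (simp add: Fp_enc_c pr_c)
  qed
  then show ?thesis unfolding LL_def using mu_nn by (intro sum_mono mult_right_mono) auto
qed

lemma LL_less: "LL Fp (m + r) < LL F (kk r)"
proof -
  obtain t0 g where t0: "enc F (kk r) t0 = c1 # g" "g \<noteq> []" using kk_r_c1 by blast
  have le: "\<forall>t\<in>UNIV. real (length (enc Fp (m + r) t)) * mu t \<le> real (length (enc F (kk r) t)) * mu t"
    using phi_len mu_nn by (auto simp: Fp_enc_c intro!: mult_right_mono)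
  have "length (phi c1 (enc F (kk r) t0)) < length (enc F (kk r) t0)" using phi_len_less[OF t0] .
  then have "real (length (enc Fp (m + r) t0)) * mu t0 < real (length (enc F (kk r) t0)) * mu t0"
    using mu_pos by (simp add: Fp_enc_c)
  then show ?thesis unfolding LL_def using le by (intro sum_strict_mono_ex1) auto
qed

lemma avg_less: "avg_len mu Fp < avg_len mu F"
proof -
  have "avg_len mu Fp = (\<Sum>a<m'. qq a * LL Fp a)" unfolding avg_len_def LL_def Fp_sd by simp
  also have "\<dots> < (\<Sum>a<m'. qq a * LL F (pr a))"
  proof (rule sum_strict_mono_ex1)
    show "\<forall>a\<in>{..<m'}. qq a * LL Fp a \<le> qq a * LL F (pr a)"
      using LL_le qq_nn by (auto intro: mult_left_mono)
    show "\<exists>a\<in>{..<m'}. qq a * LL Fp a < qq a * LL F (pr a)"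
      using LL_less qq_r_pos pr_c[of r] by (intro bexI[of _ "m + r"]) auto
  qed simp
  also have "\<dots> = (\<Sum>k<m. \<Sum>a\<in>fib k. qq a * LL F (pr a))" by (rule group_fib[symmetric])
  also have "\<dots> = (\<Sum>k<m. p k * LL F k)"
  proof (rule sum.cong[OF refl])
    fix k assume k: "k \<in> {..<m}"
    have "(\<Sum>a\<in>fib k. qq a * LL F (pr a)) = (\<Sum>a\<in>fib k. qq a) * LL F k"
      by (simp add: sum_distrib_right fib_def)
    also have "(\<Sum>a\<in>fib k. qq a) = p k"
    proof -
      have pq: "p = (\<lambda>k. if k < m then (\<Sum>a\<in>fib k. qq a) else 0)"
        by (rule stat_eq[OF rg proj_stat[OF qq_stat]])
      show ?thesis using k by (subst pq) simp
    qed
    finally show "(\<Sum>a\<in>fib k. qq a * LL F (pr a)) = p k * LL F k" .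
  qed
  also have "\<dots> = avg_len mu F" unfolding avg_len_def LL_def by simp
  finally show ?thesis .
qed

lemma Fp_F0: "F0 mu Fp"
  unfolding F0_def using Fp_ct Fp_reg Fp_ext Fp_td by blast

lemma contra: "\<not> Fopt mu F"
  using Fp_F0 avg_less unfolding Fopt_def by (meson not_le)

end


theorem lemma15:
  fixes mu :: "'s::finite \<Rightarrow> real" and F :: "'s code_tuple" and i :: nat and s :: 's
  assumes "card (UNIV :: 's set) \<ge> 2"
    and "\<forall>x. 0 < mu x \<and> mu x \<le> 1" and "(\<Sum>x\<in>UNIV. mu x) = 1"
    and "Fopt mu F" and "F1 mu F"
    and "i \<in> Rset F"
    and "Pbar 0 F i (enc F i s) = {}"
    and "card (Sset F i (enc F i s)) = 1"
  shows "card (Pset 2 F (trans F i s) []) = 4"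
proof (cases "\<forall>c1 c2. [c1, c2] \<in> Pset 2 F (trans F i s) []")
  case True
  have "Pset 2 F (trans F i s) [] = {[False, False], [False, True], [True, False], [True, True]}"
  proof (rule set_eqI; rule iffI)
    fix c assume "c \<in> Pset 2 F (trans F i s) []"
    then have "length c = 2" unfolding Pset_def by blast
    then have "c = [hd c, hd (tl c)]" by (cases c; cases "tl c") auto
    then obtain a b where "c = [a, b]" by blast
    then show "c \<in> {[False, False], [False, True], [True, False], [True, True]}" by (cases a; cases b) auto
  next
    fix c assume "c \<in> {[False, False], [False, True], [True, False], [True, True]}"
    then show "c \<in> Pset 2 F (trans F i s) []" using True by auto
  qed
  then show ?thesis by simp
next
  case False
  then obtain c1 c2 where miss: "[c1, c2] \<notin> Pset 2 F (trans F i s) []" by blast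
  have f0: "F0 mu F" using assms(4) unfolding Fopt_def by blast
  interpret L: L15 mu F i s c1 c2
  proof
    show "card (UNIV :: 's set) \<ge> 2" by (rule assms(1))
    show "\<forall>x. 0 < mu x" using assms(2) by blast
    show "(\<Sum>x\<in>UNIV. mu x) = 1" by (rule assms(3))
    show "is_code_tuple F" using f0 unfolding F0_def by blast
    show "reg mu F" using f0 unfolding F0_def by blast
    show "two_dec F" using f0 unfolding F0_def by blast
    show "\<forall>a<ntab F. Pset 1 F a [] = {[False], [True]}" using assms(5) unfolding F1_def by blast
    show "i \<in> Rset F" by (rule assms(6))
    show "Pbar 0 F i (enc F i s) = {}" by (rule assms(7))
    show "card (Sset F i (enc F i s)) = 1" by (rule assms(8))
    show "[c1, c2] \<notin> Pset 2 F (trans F i s) []" by (rule miss)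
  qed
  show ?thesis using L.contra assms(4) by blast
qed

end
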